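(* Let $\mathbf{Sober}$ be the category of sober semitopologies with continuous maps, and $\mathbf{Spatial}$ the category of spatial semiframes with semiframe morphisms. Define $\mathrm{Fr}(\mathsf P,\mathcal O)=(\mathcal O,\subseteq,\between)$ and, for a continuous $f$, $\mathrm{Fr}(f)=f^{-1}$; define $\mathrm{St}$ on objects as below and, for a semiframe morphism $g:(X',\le',\ast')\to(X,\le,\ast)$, $\mathrm{St}(g)=g^\circ:\mathrm{Points}(X,\le,\ast)\to\mathrm{Points}(X',\le',\ast')$, $g^\circ(F)=\{x'\in X'\mid g(x')\in F\}$. Then $\mathrm{Fr}:\mathbf{Sober}\to\mathbf{Spatial}^{op}$ and $\mathrm{St}:\mathbf{Spatial}^{op}\to\mathbf{Sober}$ are well-defined functors forming an equivalence of categories (a duality between $\mathbf{Sober}$ and $\mathbf{Spatial}$), with natural isomorphisms $\mathrm{nbhd}:(\mathsf P,\mathcal O)\to\mathrm{St}\,\mathrm{Fr}(\mathsf P,\mathcal O)$, $p\mapsto\{O\in\mathcal O\mid p\in O\}$, and $\mathrm{Op}:(X,\le,\ast)\to\mathrm{Fr}\,\mathrm{St}(X,\le,\ast)$, $x\mapsto\mathrm{Op}(x)$.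
   Context: A semitopology is a set $\mathsf P$ with $\mathcal O\subseteq\mathcal P(\mathsf P)$ containing $\varnothing,\mathsf P$ and closed under arbitrary unions; morphisms are continuous maps (preimages of opens are open). A semiframe is a complete join-semilattice $(X,\le)$ (with $\bot_X=\bigvee\varnothing$, $\top_X=\bigvee X$) with a relation $\ast$ that is commutative, satisfies $x\ast x$ for $x\neq\bot_X$, and $x\ast\bigvee Y$ iff $x\ast y$ for some $y\in Y$; $(\mathcal O,\subseteq,\between)$, where $O\between O'$ iff $O\cap O'\ne\varnothing$, is a semiframe. A semiframe morphism $g:(X',\le',\ast')\to(X,\le,\ast)$ is a map preserving all joins and the top element ($g(\top_{X'})=\top_X$) such that $g(x')\ast g(x'')$ implies $x'\ast' x''$. An abstract point is a nonempty, up-closed, pairwise $\ast$-compatible subset $F$ that is completely prime ($\bigvee Y\in F$ implies some $y\in Y$ lies in $F$, for all $Y$ including $\varnothing$); $\mathrm{Points}(X,\le,\ast)$ is the set of abstract points; $\mathrm{Op}(x)$ is the set of abstract points containing $x$; $\mathrm{St}(X,\le,\ast)$ is the semitopology with points $\mathrm{Points}(X,\le,\ast)$ and opens $\{\mathrm{Op}(x)\mid x\in X\}$. A semiframe is spatial when $\mathrm{Op}(x)\subseteq\mathrm{Op}(x')$ implies $x\le x'$, and $x\ast x'$ implies $\mathrm{Op}(x)\cap\mathrm{Op}(x')\ne\varnothing$. A semitopology is sober when $\mathrm{nbhd}$ is a bijection from $\mathsf P$ onto $\mathrm{Points}(\mathcal O,\subseteq,\between)$. *)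

theory Defs
  imports Main
begin

definition semitopology :: "'a set \<Rightarrow> 'a set set \<Rightarrow> bool" where
  "semitopology P T \<longleftrightarrow> T \<subseteq> Pow P \<and> {} \<in> T \<and> P \<in> T \<and> (\<forall>S. S \<subseteq> T \<longrightarrow> \<Union>S \<in> T)"

definition cont :: "'a set \<Rightarrow> 'a set set \<Rightarrow> 'b set \<Rightarrow> 'b set set \<Rightarrow> ('a \<Rightarrow> 'b) \<Rightarrow> bool" where
  "cont P T P' T' f \<longleftrightarrow> f ` P \<subseteq> P' \<and> (\<forall>U\<in>T'. f -` U \<inter> P \<in> T)"

definition between :: "'a set \<Rightarrow> 'a set \<Rightarrow> bool" where
  "between A B \<longleftrightarrow> A \<inter> B \<noteq> {}"

definition nbhd :: "'a set set \<Rightarrow> 'a \<Rightarrow> 'a set set" where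
  "nbhd T p = {U \<in> T. p \<in> U}"

definition is_lub :: "'x set \<Rightarrow> ('x \<Rightarrow> 'x \<Rightarrow> bool) \<Rightarrow> 'x set \<Rightarrow> 'x \<Rightarrow> bool" where
  "is_lub X le Y j \<longleftrightarrow> j \<in> X \<and> (\<forall>y\<in>Y. le y j) \<and> (\<forall>u\<in>X. (\<forall>y\<in>Y. le y u) \<longrightarrow> le j u)"

definition complete_join_semilattice :: "'x set \<Rightarrow> ('x \<Rightarrow> 'x \<Rightarrow> bool) \<Rightarrow> bool" where
  "complete_join_semilattice X le \<longleftrightarrow>
     (\<forall>x\<in>X. le x x) \<and>
     (\<forall>x\<in>X. \<forall>y\<in>X. le x y \<and> le y x \<longrightarrow> x = y) \<and>
     (\<forall>x\<in>X. \<forall>y\<in>X. \<forall>z\<in>X. le x y \<and> le y z \<longrightarrow> le x z) \<and>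
     (\<forall>Y. Y \<subseteq> X \<longrightarrow> (\<exists>j. is_lub X le Y j))"

definition sjoin :: "'x set \<Rightarrow> ('x \<Rightarrow> 'x \<Rightarrow> bool) \<Rightarrow> 'x set \<Rightarrow> 'x" where
  "sjoin X le Y = (THE j. is_lub X le Y j)"

definition semiframe :: "'x set \<Rightarrow> ('x \<Rightarrow> 'x \<Rightarrow> bool) \<Rightarrow> ('x \<Rightarrow> 'x \<Rightarrow> bool) \<Rightarrow> bool" where
  "semiframe X le cm \<longleftrightarrow> complete_join_semilattice X le \<and>
     (\<forall>x\<in>X. \<forall>y\<in>X. cm x y \<longleftrightarrow> cm y x) \<and>
     (\<forall>x\<in>X. x \<noteq> sjoin X le {} \<longrightarrow> cm x x) \<and>
     (\<forall>x\<in>X. \<forall>Y. Y \<subseteq> X \<longrightarrow> (cm x (sjoin X le Y) \<longleftrightarrow> (\<exists>y\<in>Y. cm x y)))"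

definition points :: "'x set \<Rightarrow> ('x \<Rightarrow> 'x \<Rightarrow> bool) \<Rightarrow> ('x \<Rightarrow> 'x \<Rightarrow> bool) \<Rightarrow> 'x set set" where
  "points X le cm = {F. F \<subseteq> X \<and> F \<noteq> {} \<and>
     (\<forall>x\<in>F. \<forall>y\<in>X. le x y \<longrightarrow> y \<in> F) \<and>
     (\<forall>x\<in>F. \<forall>y\<in>F. cm x y) \<and>
     (\<forall>Y. Y \<subseteq> X \<longrightarrow> sjoin X le Y \<in> F \<longrightarrow> (\<exists>y\<in>Y. y \<in> F))}"

definition opp :: "'x set \<Rightarrow> ('x \<Rightarrow> 'x \<Rightarrow> bool) \<Rightarrow> ('x \<Rightarrow> 'x \<Rightarrow> bool) \<Rightarrow> 'x \<Rightarrow> 'x set set" where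
  "opp X le cm x = {F \<in> points X le cm. x \<in> F}"

text \<open>the opens of St(X,le,cm); its points are points X le cm\<close>
definition st_opens :: "'x set \<Rightarrow> ('x \<Rightarrow> 'x \<Rightarrow> bool) \<Rightarrow> ('x \<Rightarrow> 'x \<Rightarrow> bool) \<Rightarrow> 'x set set set" where
  "st_opens X le cm = opp X le cm ` X"

definition spatial :: "'x set \<Rightarrow> ('x \<Rightarrow> 'x \<Rightarrow> bool) \<Rightarrow> ('x \<Rightarrow> 'x \<Rightarrow> bool) \<Rightarrow> bool" where
  "spatial X le cm \<longleftrightarrow> semiframe X le cm \<and>
     (\<forall>x\<in>X. \<forall>x'\<in>X. opp X le cm x \<subseteq> opp X le cm x' \<longrightarrow> le x x') \<and>
     (\<forall>x\<in>X. \<forall>x'\<in>X. cm x x' \<longrightarrow> opp X le cm x \<inter> opp X le cm x' \<noteq> {})"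

definition sober :: "'a set \<Rightarrow> 'a set set \<Rightarrow> bool" where
  "sober P T \<longleftrightarrow> semitopology P T \<and> bij_betw (nbhd T) P (points T (\<subseteq>) between)"

definition sf_morphism :: "'y set \<Rightarrow> ('y \<Rightarrow> 'y \<Rightarrow> bool) \<Rightarrow> ('y \<Rightarrow> 'y \<Rightarrow> bool) \<Rightarrow>
    'x set \<Rightarrow> ('x \<Rightarrow> 'x \<Rightarrow> bool) \<Rightarrow> ('x \<Rightarrow> 'x \<Rightarrow> bool) \<Rightarrow> ('y \<Rightarrow> 'x) \<Rightarrow> bool" where
  "sf_morphism X' le' cm' X le cm g \<longleftrightarrow> g ` X' \<subseteq> X \<and>
     (\<forall>Y. Y \<subseteq> X' \<longrightarrow> g (sjoin X' le' Y) = sjoin X le (g ` Y)) \<and>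
     g (sjoin X' le' X') = sjoin X le X \<and>
     (\<forall>x\<in>X'. \<forall>y\<in>X'. cm (g x) (g y) \<longrightarrow> cm' x y)"

definition fr_map :: "'a set \<Rightarrow> ('a \<Rightarrow> 'b) \<Rightarrow> 'b set \<Rightarrow> 'a set" where
  "fr_map P f U = f -` U \<inter> P"

definition st_map :: "'y set \<Rightarrow> ('y \<Rightarrow> 'x) \<Rightarrow> 'x set \<Rightarrow> 'y set" where
  "st_map X' g F = {x' \<in> X'. g x' \<in> F}"

end

theory Submission
  imports Defs
begin


lemma lub_unique:
  assumes "complete_join_semilattice X le" "is_lub X le Y j" "is_lub X le Y j'"
  shows "j = j'"
  using assms unfolding complete_join_semilattice_def is_lub_def by metis

lemma sjoin_eq:
  assumes "complete_join_semilattice X le" "is_lub X le Y j"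
  shows "sjoin X le Y = j"
  unfolding sjoin_def using assms lub_unique by (metis the_equality)

lemma sjoin_lub:
  assumes "complete_join_semilattice X le" "Y \<subseteq> X"
  shows "is_lub X le Y (sjoin X le Y)"
proof -
  obtain j where "is_lub X le Y j" using assms unfolding complete_join_semilattice_def by blast
  then show ?thesis using sjoin_eq[OF assms(1)] by simp
qed

lemma sj_in: "complete_join_semilattice X le \<Longrightarrow> Y \<subseteq> X \<Longrightarrow> sjoin X le Y \<in> X"
  using sjoin_lub is_lub_def by metis
lemma sj_ub: "complete_join_semilattice X le \<Longrightarrow> Y \<subseteq> X \<Longrightarrow> y \<in> Y \<Longrightarrow> le y (sjoin X le Y)"
  using sjoin_lub is_lub_def by metis
lemma sj_least: "complete_join_semilattice X le \<Longrightarrow> Y \<subseteq> X \<Longrightarrow> u \<in> X \<Longrightarrow> \<forall>y\<in>Y. le y u \<Longrightarrow> le (sjoin X le Y) u"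
  using sjoin_lub is_lub_def by metis

lemma sjoin_union:
  assumes "\<Union>Y \<in> T" "Y \<subseteq> T"
  shows "sjoin T (\<subseteq>) Y = \<Union>Y"
proof -
  have "is_lub T (\<subseteq>) Y (\<Union>Y)" using assms unfolding is_lub_def by auto
  moreover have "\<And>j. is_lub T (\<subseteq>) Y j \<Longrightarrow> j = \<Union>Y"
    using assms unfolding is_lub_def by (meson Sup_least Sup_upper subset_antisym)
  ultimately show ?thesis unfolding sjoin_def by (metis the_equality)
qed

lemma cjs_of: "semiframe X le cm \<Longrightarrow> complete_join_semilattice X le"
  by (simp add: semiframe_def)

lemma point_sjoin:
  assumes "complete_join_semilattice X le" "F \<in> points X le cm" "Y \<subseteq> X"
  shows "sjoin X le Y \<in> F \<longleftrightarrow> (\<exists>y\<in>Y. y \<in> F)"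
proof
  assume "sjoin X le Y \<in> F" thus "\<exists>y\<in>Y. y \<in> F" using assms(2,3) unfolding points_def by blast
next
  assume "\<exists>y\<in>Y. y \<in> F"
  then obtain y where "y \<in> Y" "y \<in> F" by blast
  moreover have "le y (sjoin X le Y)" using sj_ub assms `y \<in> Y` by metis
  moreover have "sjoin X le Y \<in> X" using sj_in assms by metis
  ultimately show "sjoin X le Y \<in> F" using assms(2) unfolding points_def by blast
qed

lemma opp_sjoin:
  assumes "complete_join_semilattice X le" "Y \<subseteq> X"
  shows "opp X le cm (sjoin X le Y) = \<Union>(opp X le cm ` Y)"
  using point_sjoin[OF assms(1) _ assms(2)] unfolding opp_def by auto

lemma opp_top:
  assumes "complete_join_semilattice X le"
  shows "opp X le cm (sjoin X le X) = points X le cm"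
proof -
  have "\<And>F. F \<in> points X le cm \<Longrightarrow> sjoin X le X \<in> F"
  proof -
    fix F assume F: "F \<in> points X le cm"
    then obtain x where "x \<in> F" "F \<subseteq> X" unfolding points_def by auto
    thus "sjoin X le X \<in> F" using point_sjoin[OF assms F] by blast
  qed
  thus ?thesis unfolding opp_def by auto
qed

lemma opp_inj:
  assumes "spatial X le cm" "x \<in> X" "y \<in> X" "opp X le cm x = opp X le cm y"
  shows "x = y"
proof -
  have c: "complete_join_semilattice X le" using assms(1) cjs_of spatial_def by blast
  have "le x y" "le y x" using assms unfolding spatial_def by auto
  thus ?thesis using c assms(2,3) unfolding complete_join_semilattice_def by blast
qed

lemma st_union:
  assumes "complete_join_semilattice X le" "S \<subseteq> st_opens X le cm"
  shows "\<Union>S \<in> st_opens X le cm"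
proof -
  define Y where "Y = {x \<in> X. opp X le cm x \<in> S}"
  have S: "S = opp X le cm ` Y" using assms(2) unfolding Y_def st_opens_def by auto
  have "\<Union>S = opp X le cm (sjoin X le Y)" using S opp_sjoin[OF assms(1)] Y_def by auto
  thus ?thesis unfolding st_opens_def using sj_in[OF assms(1)] Y_def by auto
qed

lemma st_semitop:
  assumes "complete_join_semilattice X le"
  shows "semitopology (points X le cm) (st_opens X le cm)"
  unfolding semitopology_def
proof (intro conjI allI impI)
  show "st_opens X le cm \<subseteq> Pow (points X le cm)" unfolding st_opens_def opp_def by auto
  show "{} \<in> st_opens X le cm" using st_union[OF assms, of "{}"] by simp
  show "points X le cm \<in> st_opens X le cm" using opp_top[OF assms] sj_in[OF assms]
    unfolding st_opens_def by (metis image_eqI order_refl)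
  show "\<And>S. S \<subseteq> st_opens X le cm \<Longrightarrow> \<Union> S \<in> st_opens X le cm" using st_union[OF assms] by blast
qed

lemma st_sjoin:
  assumes "complete_join_semilattice X le" "S \<subseteq> st_opens X le cm"
  shows "sjoin (st_opens X le cm) (\<subseteq>) S = \<Union>S"
  using sjoin_union st_union assms by metis



lemma opp_mem[simp]: "F \<in> opp X le cm x \<longleftrightarrow> F \<in> points X le cm \<and> x \<in> F"
  by (simp add: opp_def)
lemma nbhd_mem[simp]: "U \<in> nbhd T p \<longleftrightarrow> U \<in> T \<and> p \<in> U"
  by (simp add: nbhd_def)

lemma pointsD:
  assumes "F \<in> points X le cm"
  shows "F \<subseteq> X" "F \<noteq> {}" "\<And>x y. x \<in> F \<Longrightarrow> y \<in> X \<Longrightarrow> le x y \<Longrightarrow> y \<in> F"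
    "\<And>x y. x \<in> F \<Longrightarrow> y \<in> F \<Longrightarrow> cm x y"
    "\<And>Y. Y \<subseteq> X \<Longrightarrow> sjoin X le Y \<in> F \<Longrightarrow> \<exists>y\<in>Y. y \<in> F"
  using assms unfolding points_def by blast+

lemma pointsI:
  assumes "F \<subseteq> X" "F \<noteq> {}" "\<And>x y. x \<in> F \<Longrightarrow> y \<in> X \<Longrightarrow> le x y \<Longrightarrow> y \<in> F"
    "\<And>x y. x \<in> F \<Longrightarrow> y \<in> F \<Longrightarrow> cm x y"
    "\<And>Y. Y \<subseteq> X \<Longrightarrow> sjoin X le Y \<in> F \<Longrightarrow> \<exists>y\<in>Y. y \<in> F"
  shows "F \<in> points X le cm"
  using assms unfolding points_def by blast

lemma stE_inj:
  assumes "F \<in> points X le cm" "G \<in> points X le cm" "nbhd (st_opens X le cm) F = nbhd (st_opens X le cm) G"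
  shows "F = G"
proof -
  have "\<And>F G x. F \<in> points X le cm \<Longrightarrow> G \<in> points X le cm \<Longrightarrow>
     nbhd (st_opens X le cm) F = nbhd (st_opens X le cm) G \<Longrightarrow> x \<in> F \<Longrightarrow> x \<in> G"
  proof -
    fix F G x assume a: "F \<in> points X le cm" "G \<in> points X le cm"
      "nbhd (st_opens X le cm) F = nbhd (st_opens X le cm) G" "x \<in> F"
    hence xX: "x \<in> X" using pointsD(1) by blast
    have "opp X le cm x \<in> nbhd (st_opens X le cm) F" using a(1,4) xX unfolding st_opens_def by simp
    hence "opp X le cm x \<in> nbhd (st_opens X le cm) G" by (simp only: a(3))
    thus "x \<in> G" by simp
  qed
  thus ?thesis using assms by blast
qed

lemma stE_img:
  assumes c: "complete_join_semilattice X le" and F: "F \<in> points X le cm"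
  shows "nbhd (st_opens X le cm) F \<in> points (st_opens X le cm) (\<subseteq>) between"
proof (rule pointsI)
  show "nbhd (st_opens X le cm) F \<subseteq> st_opens X le cm" by auto
  obtain x where x: "x \<in> F" using pointsD(2)[OF F] by blast
  hence "x \<in> X" using pointsD(1)[OF F] by blast
  hence "opp X le cm x \<in> nbhd (st_opens X le cm) F" using x F unfolding st_opens_def by simp
  thus "nbhd (st_opens X le cm) F \<noteq> {}" by blast
  show "\<And>U V. U \<in> nbhd (st_opens X le cm) F \<Longrightarrow> V \<in> st_opens X le cm \<Longrightarrow> U \<subseteq> V
        \<Longrightarrow> V \<in> nbhd (st_opens X le cm) F" by auto
  show "\<And>U V. U \<in> nbhd (st_opens X le cm) F \<Longrightarrow> V \<in> nbhd (st_opens X le cm) F \<Longrightarrow> between U V"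
    unfolding between_def by auto
  fix Y assume Y: "Y \<subseteq> st_opens X le cm" "sjoin (st_opens X le cm) (\<subseteq>) Y \<in> nbhd (st_opens X le cm) F"
  hence "F \<in> \<Union>Y" using st_sjoin[OF c Y(1)] by simp
  thus "\<exists>y\<in>Y. y \<in> nbhd (st_opens X le cm) F" using Y(1) by auto
qed

lemma stE_surj:
  assumes sp: "spatial X le cm" and Q: "Q \<in> points (st_opens X le cm) (\<subseteq>) between"
  shows "\<exists>F\<in>points X le cm. Q = nbhd (st_opens X le cm) F"
proof -
  have c: "complete_join_semilattice X le" using sp cjs_of unfolding spatial_def by blast
  define F where "F = {x \<in> X. opp X le cm x \<in> Q}"
  have oppS: "\<And>x. x \<in> X \<Longrightarrow> opp X le cm x \<in> st_opens X le cm" unfolding st_opens_def by simp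
  have opp_mono: "\<And>x y. x \<in> X \<Longrightarrow> y \<in> X \<Longrightarrow> le x y \<Longrightarrow> opp X le cm x \<subseteq> opp X le cm y"
  proof
    fix x y G assume "x \<in> X" "y \<in> X" "le x y" "G \<in> opp X le cm x"
    thus "G \<in> opp X le cm y" using pointsD(3)[of G X le cm x y] by simp
  qed
  have FP: "F \<in> points X le cm"
  proof (rule pointsI)
    show "F \<subseteq> X" unfolding F_def by auto
    obtain U where "U \<in> Q" using pointsD(2)[OF Q] by blast
    moreover then obtain x where "x \<in> X" "U = opp X le cm x" using pointsD(1)[OF Q] unfolding st_opens_def by auto
    ultimately show "F \<noteq> {}" unfolding F_def by auto
    show "\<And>x y. x \<in> F \<Longrightarrow> y \<in> X \<Longrightarrow> le x y \<Longrightarrow> y \<in> F"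
    proof -
      fix x y assume a: "x \<in> F" "y \<in> X" "le x y"
      hence "x \<in> X" "opp X le cm x \<in> Q" unfolding F_def by auto
      moreover have "opp X le cm x \<subseteq> opp X le cm y" using opp_mono a `x \<in> X` by blast
      ultimately have "opp X le cm y \<in> Q" using pointsD(3)[OF Q _ oppS[OF a(2)]] by blast
      thus "y \<in> F" using a(2) unfolding F_def by auto
    qed
    show "\<And>x y. x \<in> F \<Longrightarrow> y \<in> F \<Longrightarrow> cm x y"
    proof -
      fix x y assume a: "x \<in> F" "y \<in> F"
      hence "opp X le cm x \<in> Q" "opp X le cm y \<in> Q" unfolding F_def by auto
      hence "between (opp X le cm x) (opp X le cm y)" by (rule pointsD(4)[OF Q])
      then obtain G where "G \<in> opp X le cm x" "G \<in> opp X le cm y" unfolding between_def by blast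
      hence "G \<in> points X le cm" "x \<in> G" "y \<in> G" by auto
      thus "cm x y" by (rule pointsD(4))
    qed
    show "\<And>Y. Y \<subseteq> X \<Longrightarrow> sjoin X le Y \<in> F \<Longrightarrow> \<exists>y\<in>Y. y \<in> F"
    proof -
      fix Y assume Y: "Y \<subseteq> X" "sjoin X le Y \<in> F"
      have sub: "opp X le cm ` Y \<subseteq> st_opens X le cm" using Y(1) oppS by blast
      have "opp X le cm (sjoin X le Y) = sjoin (st_opens X le cm) (\<subseteq>) (opp X le cm ` Y)"
        using opp_sjoin[OF c Y(1)] st_sjoin[OF c sub] by simp
      hence "sjoin (st_opens X le cm) (\<subseteq>) (opp X le cm ` Y) \<in> Q" using Y(2) unfolding F_def by simp
      then obtain U where "U \<in> opp X le cm ` Y" "U \<in> Q" using pointsD(5)[OF Q sub] by blast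
      thus "\<exists>y\<in>Y. y \<in> F" using Y(1) unfolding F_def by auto
    qed
  qed
  have "Q = nbhd (st_opens X le cm) F"
  proof (rule set_eqI)
    fix U show "U \<in> Q \<longleftrightarrow> U \<in> nbhd (st_opens X le cm) F"
    proof
      assume U: "U \<in> Q"
      then obtain x where x: "x \<in> X" "U = opp X le cm x" using pointsD(1)[OF Q] unfolding st_opens_def by auto
      thus "U \<in> nbhd (st_opens X le cm) F" using U FP unfolding F_def by (simp add: oppS)
    next
      assume U: "U \<in> nbhd (st_opens X le cm) F"
      then obtain x where x: "x \<in> X" "U = opp X le cm x" unfolding st_opens_def by auto
      hence "x \<in> F" using U by simp
      thus "U \<in> Q" unfolding F_def using x by simp
    qed
  qed
  thus ?thesis using FP by blast
qed

lemma stE: "spatial X le cm \<Longrightarrow> sober (points X le cm) (st_opens X le cm)"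
proof -
  assume sp: "spatial X le cm"
  have c: "complete_join_semilattice X le" using sp cjs_of unfolding spatial_def by blast
  show ?thesis unfolding sober_def bij_betw_def
  proof (intro conjI st_semitop[OF c])
    show "inj_on (nbhd (st_opens X le cm)) (points X le cm)" using stE_inj by (metis inj_onI)
    show "nbhd (st_opens X le cm) ` points X le cm = points (st_opens X le cm) (\<subseteq>) between"
      using stE_img[OF c] stE_surj[OF sp] by blast
  qed
qed



lemma semitop_sjoin: "semitopology P T \<Longrightarrow> Y \<subseteq> T \<Longrightarrow> sjoin T (\<subseteq>) Y = \<Union>Y"
  using sjoin_union unfolding semitopology_def by metis

lemma semitop_cjs: "semitopology P T \<Longrightarrow> complete_join_semilattice T (\<subseteq>)"
proof -
  assume st: "semitopology P T"
  have "\<And>Y. Y \<subseteq> T \<Longrightarrow> is_lub T (\<subseteq>) Y (\<Union>Y)"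
    using st unfolding semitopology_def is_lub_def by auto
  hence "\<forall>Y. Y \<subseteq> T \<longrightarrow> (\<exists>j. is_lub T (\<subseteq>) Y j)" by blast
  thus ?thesis unfolding complete_join_semilattice_def by (simp add: subset_antisym) (meson order.trans)
qed

lemma sober_nbhd: "sober P T \<Longrightarrow> p \<in> P \<Longrightarrow> nbhd T p \<in> points T (\<subseteq>) between"
  unfolding sober_def bij_betw_def by blast


lemma frA: "sober P T \<Longrightarrow> spatial T (\<subseteq>) between"
proof -
  assume s: "sober P T"
  hence st: "semitopology P T" by (simp add: sober_def)
  have sf: "semiframe T (\<subseteq>) between"
    unfolding semiframe_def
  proof (intro conjI ballI allI impI)
    show "complete_join_semilattice T (\<subseteq>)" using semitop_cjs[OF st] .
    show "\<And>x y. between x y = between y x" unfolding between_def by blast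
    show "\<And>x. x \<in> T \<Longrightarrow> x \<noteq> sjoin T (\<subseteq>) {} \<Longrightarrow> between x x"
      using semitop_sjoin[OF st, of "{}"] unfolding between_def by auto
    show "\<And>x Y. x \<in> T \<Longrightarrow> Y \<subseteq> T \<Longrightarrow> between x (sjoin T (\<subseteq>) Y) = (\<exists>y\<in>Y. between x y)"
      using semitop_sjoin[OF st] unfolding between_def by auto
  qed
  have T: "T \<subseteq> Pow P" using st unfolding semitopology_def by blast
  show ?thesis unfolding spatial_def
  proof (intro conjI ballI impI sf)
    fix x x' assume x: "x \<in> T" "x' \<in> T" and sub: "opp T (\<subseteq>) between x \<subseteq> opp T (\<subseteq>) between x'"
    show "x \<subseteq> x'"
    proof
      fix p assume "p \<in> x"
      hence p: "p \<in> P" using T x by auto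
      have "nbhd T p \<in> opp T (\<subseteq>) between x" using sober_nbhd[OF s p] `p \<in> x` x
        by simp
      hence "nbhd T p \<in> opp T (\<subseteq>) between x'" using sub by blast
      thus "p \<in> x'" using x by simp
    qed
  next
    fix x x' assume x: "x \<in> T" "x' \<in> T" and b: "between x x'"
    then obtain p where "p \<in> x" "p \<in> x'" unfolding between_def by blast
    hence p: "p \<in> P" using T x by auto
    have "nbhd T p \<in> opp T (\<subseteq>) between x \<inter> opp T (\<subseteq>) between x'"
      using sober_nbhd[OF s p] `p \<in> x` `p \<in> x'` x by simp
    thus "opp T (\<subseteq>) between x \<inter> opp T (\<subseteq>) between x' \<noteq> {}" by blast
  qed
qed



lemma frB: "sober P T \<Longrightarrow> sober P' T' \<Longrightarrow> cont P T P' T' f \<Longrightarrow>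
      sf_morphism T' (\<subseteq>) between T (\<subseteq>) between (fr_map P f)"
proof -
  assume s: "sober P T" "sober P' T'" and c: "cont P T P' T' f"
  have st: "semitopology P T" "semitopology P' T'" using s by (auto simp: sober_def)
  have img: "fr_map P f ` T' \<subseteq> T" using c unfolding cont_def fr_map_def by auto
  show ?thesis unfolding sf_morphism_def
  proof (intro conjI allI impI ballI img)
    fix Y assume Y: "Y \<subseteq> T'"
    have "fr_map P f ` Y \<subseteq> T" using Y img by auto
    hence "sjoin T (\<subseteq>) (fr_map P f ` Y) = \<Union>(fr_map P f ` Y)" using semitop_sjoin[OF st(1)] by blast
    moreover have "sjoin T' (\<subseteq>) Y = \<Union>Y" using semitop_sjoin[OF st(2) Y] .
    moreover have "fr_map P f (\<Union>Y) = \<Union>(fr_map P f ` Y)" unfolding fr_map_def by blast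
    ultimately show "fr_map P f (sjoin T' (\<subseteq>) Y) = sjoin T (\<subseteq>) (fr_map P f ` Y)" by simp
  next
    have "\<Union>T' = P'" using st(2) unfolding semitopology_def by blast
    hence "sjoin T' (\<subseteq>) T' = P'" using semitop_sjoin[OF st(2), of T'] by simp
    moreover have "\<Union>T = P" using st(1) unfolding semitopology_def by blast
    hence "sjoin T (\<subseteq>) T = P" using semitop_sjoin[OF st(1), of T] by simp
    moreover have "fr_map P f P' = P" using c unfolding fr_map_def cont_def by blast
    ultimately show "fr_map P f (sjoin T' (\<subseteq>) T') = sjoin T (\<subseteq>) T" by simp
  next
    fix x y assume "between (fr_map P f x) (fr_map P f y)"
    thus "between x y" unfolding between_def fr_map_def by blast
  qed
qed

lemma frC: "sober P T \<Longrightarrow> U \<in> T \<Longrightarrow> fr_map P id U = U"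
  unfolding sober_def semitopology_def fr_map_def by auto

lemma frD: "cont P1 T1 P2 T2 f \<Longrightarrow> fr_map P1 (h \<circ> f) U = fr_map P1 f (fr_map P2 h U)"
  unfolding cont_def fr_map_def by auto



lemma sp_cjs: "spatial X le cm \<Longrightarrow> complete_join_semilattice X le"
  using cjs_of unfolding spatial_def by blast

lemma cjs_refl: "complete_join_semilattice X le \<Longrightarrow> x \<in> X \<Longrightarrow> le x x"
  unfolding complete_join_semilattice_def by blast

lemma sjoin_pair:
  assumes c: "complete_join_semilattice X le" and "x \<in> X" "y \<in> X" "le x y"
  shows "sjoin X le {x, y} = y"
proof (rule sjoin_eq[OF c])
  show "is_lub X le {x, y} y" unfolding is_lub_def using assms cjs_refl[OF c] by auto
qed

lemma stmap_point:
  assumes c': "complete_join_semilattice X' le'" and c: "complete_join_semilattice X le"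
    and g: "sf_morphism X' le' cm' X le cm g" and F: "F \<in> points X le cm"
  shows "st_map X' g F \<in> points X' le' cm'"
proof (rule pointsI)
  have gX: "\<And>x. x \<in> X' \<Longrightarrow> g x \<in> X" using g unfolding sf_morphism_def by blast
  have gj: "\<And>Y. Y \<subseteq> X' \<Longrightarrow> g (sjoin X' le' Y) = sjoin X le (g ` Y)"
    using g unfolding sf_morphism_def by blast
  have gt: "g (sjoin X' le' X') = sjoin X le X" using g unfolding sf_morphism_def by blast
  have gc: "\<And>x y. x \<in> X' \<Longrightarrow> y \<in> X' \<Longrightarrow> cm (g x) (g y) \<Longrightarrow> cm' x y"
    using g unfolding sf_morphism_def by blast
  show "st_map X' g F \<subseteq> X'" unfolding st_map_def by auto
  obtain x where x: "x \<in> F" using pointsD(2)[OF F] by blast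
  have "sjoin X le X \<in> F" using point_sjoin[OF c F, of X] x pointsD(1)[OF F] by blast
  moreover have "sjoin X' le' X' \<in> X'" using sj_in[OF c'] by blast
  ultimately have "sjoin X' le' X' \<in> st_map X' g F" unfolding st_map_def using gt by simp
  thus "st_map X' g F \<noteq> {}" by blast
  show "\<And>x y. x \<in> st_map X' g F \<Longrightarrow> y \<in> X' \<Longrightarrow> le' x y \<Longrightarrow> y \<in> st_map X' g F"
  proof -
    fix x y assume a: "x \<in> st_map X' g F" "y \<in> X'" "le' x y"
    hence xX: "x \<in> X'" "g x \<in> F" unfolding st_map_def by auto
    have "g y = sjoin X le (g ` {x, y})" using gj[of "{x,y}"] sjoin_pair[OF c' xX(1) a(2,3)] xX a by simp
    hence "g y \<in> F" using point_sjoin[OF c F, of "g ` {x,y}"] xX gX a(2) by auto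
    thus "y \<in> st_map X' g F" unfolding st_map_def using a(2) by simp
  qed
  show "\<And>x y. x \<in> st_map X' g F \<Longrightarrow> y \<in> st_map X' g F \<Longrightarrow> cm' x y"
    unfolding st_map_def using gc pointsD(4)[OF F] by blast
  show "\<And>Y. Y \<subseteq> X' \<Longrightarrow> sjoin X' le' Y \<in> st_map X' g F \<Longrightarrow> \<exists>y\<in>Y. y \<in> st_map X' g F"
  proof -
    fix Y assume Y: "Y \<subseteq> X'" "sjoin X' le' Y \<in> st_map X' g F"
    hence "sjoin X le (g ` Y) \<in> F" using gj unfolding st_map_def by auto
    moreover have "g ` Y \<subseteq> X" using Y gX by blast
    ultimately obtain y where "y \<in> Y" "g y \<in> F" using point_sjoin[OF c F] by blast
    thus "\<exists>y\<in>Y. y \<in> st_map X' g F" unfolding st_map_def using Y by blast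
  qed
qed

lemma stF:
  assumes "spatial X' le' cm'" "spatial X le cm" and g: "sf_morphism X' le' cm' X le cm g"
  shows "cont (points X le cm) (st_opens X le cm) (points X' le' cm') (st_opens X' le' cm') (st_map X' g)"
proof -
  have c: "complete_join_semilattice X' le'" "complete_join_semilattice X le" using assms sp_cjs by blast+
  have gX: "\<And>x. x \<in> X' \<Longrightarrow> g x \<in> X" using g unfolding sf_morphism_def by blast
  have pre: "\<And>x'. x' \<in> X' \<Longrightarrow> st_map X' g -` opp X' le' cm' x' \<inter> points X le cm = opp X le cm (g x')"
  proof (rule set_eqI)
    fix x' F assume x': "x' \<in> X'"
    show "F \<in> st_map X' g -` opp X' le' cm' x' \<inter> points X le cm \<longleftrightarrow> F \<in> opp X le cm (g x')"
      using stmap_point[OF c g, of F] x' unfolding st_map_def by auto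
  qed
  show ?thesis unfolding cont_def
  proof (intro conjI ballI)
    show "st_map X' g ` points X le cm \<subseteq> points X' le' cm'" using stmap_point[OF c g] by blast
    fix U assume "U \<in> st_opens X' le' cm'"
    then obtain x' where "x' \<in> X'" "U = opp X' le' cm' x'" unfolding st_opens_def by blast
    thus "st_map X' g -` U \<inter> points X le cm \<in> st_opens X le cm"
      using pre gX unfolding st_opens_def by simp
  qed
qed

lemma stG: "F \<in> points X le cm \<Longrightarrow> st_map X id F = F"
  using pointsD(1) unfolding st_map_def by fastforce

lemma stH: "sf_morphism X1 le1 cm1 X2 le2 cm2 g1 \<Longrightarrow>
   st_map X1 (g2 \<circ> g1) F = st_map X1 g1 (st_map X2 g2 F)"
  unfolding sf_morphism_def st_map_def by auto

lemma nbhdI: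
  assumes s: "sober P T"
  shows "cont P T (points T (\<subseteq>) between) (st_opens T (\<subseteq>) between) (nbhd T) \<and>
      (\<exists>k. cont (points T (\<subseteq>) between) (st_opens T (\<subseteq>) between) P T k \<and>
           (\<forall>p\<in>P. k (nbhd T p) = p) \<and>
           (\<forall>F\<in>points T (\<subseteq>) between. nbhd T (k F) = F))"
proof -
  have st: "semitopology P T" using s by (simp add: sober_def)
  have TP: "\<And>U. U \<in> T \<Longrightarrow> U \<subseteq> P" using st unfolding semitopology_def by blast
  have b: "bij_betw (nbhd T) P (points T (\<subseteq>) between)" using s by (simp add: sober_def)
  have c1: "cont P T (points T (\<subseteq>) between) (st_opens T (\<subseteq>) between) (nbhd T)"
    unfolding cont_def
  proof (intro conjI ballI)
    show "nbhd T ` P \<subseteq> points T (\<subseteq>) between" using b unfolding bij_betw_def by blast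
    fix U assume "U \<in> st_opens T (\<subseteq>) between"
    then obtain x where x: "x \<in> T" "U = opp T (\<subseteq>) between x" unfolding st_opens_def by blast
    have "nbhd T -` U \<inter> P = x"
    proof (rule set_eqI)
      fix p show "p \<in> nbhd T -` U \<inter> P \<longleftrightarrow> p \<in> x"
      proof (cases "p \<in> P")
        case True
        then show ?thesis using sober_nbhd[OF s True] x by simp
      qed (use TP[OF x(1)] in blast)
    qed
    thus "nbhd T -` U \<inter> P \<in> T" using x by simp
  qed
  define k where "k = inv_into P (nbhd T)"
  have inj: "inj_on (nbhd T) P" and img: "nbhd T ` P = points T (\<subseteq>) between"
    using b unfolding bij_betw_def by auto
  have k1: "\<forall>p\<in>P. k (nbhd T p) = p" unfolding k_def using inv_into_f_f[OF inj] by blast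
  have k2: "\<forall>F\<in>points T (\<subseteq>) between. nbhd T (k F) = F"
  proof
    fix F assume "F \<in> points T (\<subseteq>) between"
    hence "F \<in> nbhd T ` P" using img by simp
    thus "nbhd T (k F) = F" unfolding k_def by (rule f_inv_into_f)
  qed
  have k3: "\<And>F. F \<in> points T (\<subseteq>) between \<Longrightarrow> k F \<in> P"
  proof -
    fix F assume "F \<in> points T (\<subseteq>) between"
    hence "F \<in> nbhd T ` P" using img by simp
    thus "k F \<in> P" unfolding k_def by (rule inv_into_into)
  qed
  have c2: "cont (points T (\<subseteq>) between) (st_opens T (\<subseteq>) between) P T k"
    unfolding cont_def
  proof (intro conjI ballI)
    show "k ` points T (\<subseteq>) between \<subseteq> P" using k3 by blast
    fix U assume U: "U \<in> T"
    have "k -` U \<inter> points T (\<subseteq>) between = opp T (\<subseteq>) between U"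
    proof (rule set_eqI)
      fix F
      show "F \<in> k -` U \<inter> points T (\<subseteq>) between \<longleftrightarrow> F \<in> opp T (\<subseteq>) between U"
      proof (cases "F \<in> points T (\<subseteq>) between")
        case True
        have "k F \<in> U \<longleftrightarrow> U \<in> nbhd T (k F)" using U by simp
        also have "\<dots> \<longleftrightarrow> U \<in> F" using k2 True by simp
        finally show ?thesis using True by simp
      qed simp
    qed
    thus "k -` U \<inter> points T (\<subseteq>) between \<in> st_opens T (\<subseteq>) between"
      unfolding st_opens_def using U by simp
  qed
  show ?thesis by (intro conjI exI[of _ k] c1 c2 k1 k2)
qed

lemma nbhdJ: "cont P T P' T' f \<Longrightarrow> p \<in> P \<Longrightarrow> st_map T' (fr_map P f) (nbhd T p) = nbhd T' (f p)"
  unfolding st_map_def fr_map_def cont_def by auto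

lemma opK:
  assumes sp: "spatial X le cm"
  shows "sf_morphism X le cm (st_opens X le cm) (\<subseteq>) between (opp X le cm) \<and>
      (\<exists>k. sf_morphism (st_opens X le cm) (\<subseteq>) between X le cm k \<and>
           (\<forall>x\<in>X. k (opp X le cm x) = x) \<and>
           (\<forall>U\<in>st_opens X le cm. opp X le cm (k U) = U))"
proof -
  have c: "complete_join_semilattice X le" using sp sp_cjs by blast
  have sp2: "\<And>x y. x \<in> X \<Longrightarrow> y \<in> X \<Longrightarrow> cm x y \<Longrightarrow> opp X le cm x \<inter> opp X le cm y \<noteq> {}"
    using sp unfolding spatial_def by blast
  have oppS: "\<And>x. x \<in> X \<Longrightarrow> opp X le cm x \<in> st_opens X le cm" unfolding st_opens_def by simp
  have oj: "\<And>Y. Y \<subseteq> X \<Longrightarrow> opp X le cm (sjoin X le Y) = sjoin (st_opens X le cm) (\<subseteq>) (opp X le cm ` Y)"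
  proof -
    fix Y assume Y: "Y \<subseteq> X"
    hence "opp X le cm ` Y \<subseteq> st_opens X le cm" using oppS by blast
    thus "opp X le cm (sjoin X le Y) = sjoin (st_opens X le cm) (\<subseteq>) (opp X le cm ` Y)"
      using opp_sjoin[OF c Y] st_sjoin[OF c] by simp
  qed
  have m1: "sf_morphism X le cm (st_opens X le cm) (\<subseteq>) between (opp X le cm)"
    unfolding sf_morphism_def
  proof (intro conjI allI impI ballI)
    show "opp X le cm ` X \<subseteq> st_opens X le cm" unfolding st_opens_def by simp
    show "\<And>Y. Y \<subseteq> X \<Longrightarrow> opp X le cm (sjoin X le Y) = sjoin (st_opens X le cm) (\<subseteq>) (opp X le cm ` Y)"
      using oj .
    show "opp X le cm (sjoin X le X) = sjoin (st_opens X le cm) (\<subseteq>) (st_opens X le cm)"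
      using oj[of X] unfolding st_opens_def by simp
    fix x y assume "x \<in> X" "y \<in> X" "between (opp X le cm x) (opp X le cm y)"
    then obtain G where "G \<in> opp X le cm x" "G \<in> opp X le cm y" unfolding between_def by blast
    hence "G \<in> points X le cm" "x \<in> G" "y \<in> G" by auto
    thus "cm x y" by (rule pointsD(4))
  qed
  have inj: "inj_on (opp X le cm) X" using opp_inj[OF sp] by (meson inj_onI)
  define k where "k = inv_into X (opp X le cm)"
  have k1: "\<forall>x\<in>X. k (opp X le cm x) = x" unfolding k_def using inv_into_f_f[OF inj] by blast
  have k2: "\<forall>U\<in>st_opens X le cm. opp X le cm (k U) = U"
  proof
    fix U assume "U \<in> st_opens X le cm"
    thus "opp X le cm (k U) = U" unfolding k_def st_opens_def by (rule f_inv_into_f)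
  qed
  have k3: "\<And>U. U \<in> st_opens X le cm \<Longrightarrow> k U \<in> X"
  proof -
    fix U assume "U \<in> st_opens X le cm"
    thus "k U \<in> X" unfolding k_def st_opens_def by (rule inv_into_into)
  qed
  have kj: "\<And>Y. Y \<subseteq> st_opens X le cm \<Longrightarrow> k (sjoin (st_opens X le cm) (\<subseteq>) Y) = sjoin X le (k ` Y)"
  proof -
    fix Y assume Y: "Y \<subseteq> st_opens X le cm"
    have Z: "k ` Y \<subseteq> X" using Y k3 by blast
    have "opp X le cm ` (k ` Y) = Y" using Y k2 by (auto simp: image_iff)
    hence "sjoin (st_opens X le cm) (\<subseteq>) Y = opp X le cm (sjoin X le (k ` Y))" using oj[OF Z] by simp
    thus "k (sjoin (st_opens X le cm) (\<subseteq>) Y) = sjoin X le (k ` Y)" using k1 sj_in[OF c Z] by simp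
  qed
  have m2: "sf_morphism (st_opens X le cm) (\<subseteq>) between X le cm k"
    unfolding sf_morphism_def
  proof (intro conjI allI impI ballI)
    show "k ` st_opens X le cm \<subseteq> X" using k3 by blast
    show "\<And>Y. Y \<subseteq> st_opens X le cm \<Longrightarrow> k (sjoin (st_opens X le cm) (\<subseteq>) Y) = sjoin X le (k ` Y)"
      using kj .
    have "k ` st_opens X le cm = X" unfolding st_opens_def using k1 by (auto simp: image_iff)
    thus "k (sjoin (st_opens X le cm) (\<subseteq>) (st_opens X le cm)) = sjoin X le X" using kj[of "st_opens X le cm"] by simp
    fix U V assume UV: "U \<in> st_opens X le cm" "V \<in> st_opens X le cm" "cm (k U) (k V)"
    hence "opp X le cm (k U) \<inter> opp X le cm (k V) \<noteq> {}" using sp2 k3 by blast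
    thus "between U V" using k2 UV unfolding between_def by simp
  qed
  show ?thesis by (intro conjI exI[of _ k] m1 m2 k1 k2)
qed

lemma opL:
  assumes "spatial X' le' cm'" "spatial X le cm" and g: "sf_morphism X' le' cm' X le cm g" and x': "x' \<in> X'"
  shows "fr_map (points X le cm) (st_map X' g) (opp X' le' cm' x') = opp X le cm (g x')"
proof -
  have c: "complete_join_semilattice X' le'" "complete_join_semilattice X le" using assms sp_cjs by blast+
  show ?thesis
  proof (rule set_eqI)
    fix F
    show "F \<in> fr_map (points X le cm) (st_map X' g) (opp X' le' cm' x') \<longleftrightarrow> F \<in> opp X le cm (g x')"
      using stmap_point[OF c g, of F] x' unfolding st_map_def fr_map_def by auto
  qed
qed


theorem theorem8p18:
  shows
  "\<comment> \<open>Fr on objects: Sober -> Spatial\<close>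
   (\<forall>(P::'a set) T. sober P T \<longrightarrow> spatial T (\<subseteq>) between) \<and>
   \<comment> \<open>Fr on morphisms\<close>
   (\<forall>(P::'a set) T (P'::'b set) T' f. sober P T \<and> sober P' T' \<and> cont P T P' T' f \<longrightarrow>
      sf_morphism T' (\<subseteq>) between T (\<subseteq>) between (fr_map P f)) \<and>
   \<comment> \<open>Fr preserves identities\<close>
   (\<forall>(P::'a set) T. sober P T \<longrightarrow> (\<forall>U\<in>T. fr_map P id U = U)) \<and>
   \<comment> \<open>Fr preserves composition (contravariantly)\<close>
   (\<forall>(P1::'a set) T1 (P2::'b set) T2 (P3::'c set) T3 f h.
      sober P1 T1 \<and> sober P2 T2 \<and> sober P3 T3 \<and> cont P1 T1 P2 T2 f \<and> cont P2 T2 P3 T3 h \<longrightarrow>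
      (\<forall>U\<in>T3. fr_map P1 (h \<circ> f) U = fr_map P1 f (fr_map P2 h U))) \<and>
   \<comment> \<open>St on objects: Spatial -> Sober\<close>
   (\<forall>(X::'x set) le cm. spatial X le cm \<longrightarrow> sober (points X le cm) (st_opens X le cm)) \<and>
   \<comment> \<open>St on morphisms\<close>
   (\<forall>(X'::'y set) le' cm' (X::'x set) le cm g.
      spatial X' le' cm' \<and> spatial X le cm \<and> sf_morphism X' le' cm' X le cm g \<longrightarrow>
      cont (points X le cm) (st_opens X le cm) (points X' le' cm') (st_opens X' le' cm') (st_map X' g)) \<and>
   \<comment> \<open>St preserves identities\<close>
   (\<forall>(X::'x set) le cm. spatial X le cm \<longrightarrow> (\<forall>F\<in>points X le cm. st_map X id F = F)) \<and>
   \<comment> \<open>St preserves composition (contravariantly)\<close>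
   (\<forall>(X1::'x set) le1 cm1 (X2::'y set) le2 cm2 (X3::'z set) le3 cm3 g1 g2.
      spatial X1 le1 cm1 \<and> spatial X2 le2 cm2 \<and> spatial X3 le3 cm3 \<and>
      sf_morphism X1 le1 cm1 X2 le2 cm2 g1 \<and> sf_morphism X2 le2 cm2 X3 le3 cm3 g2 \<longrightarrow>
      (\<forall>F\<in>points X3 le3 cm3. st_map X1 (g2 \<circ> g1) F = st_map X1 g1 (st_map X2 g2 F))) \<and>
   \<comment> \<open>nbhd is an isomorphism in Sober\<close>
   (\<forall>(P::'a set) T. sober P T \<longrightarrow>
      cont P T (points T (\<subseteq>) between) (st_opens T (\<subseteq>) between) (nbhd T) \<and>
      (\<exists>k. cont (points T (\<subseteq>) between) (st_opens T (\<subseteq>) between) P T k \<and>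
           (\<forall>p\<in>P. k (nbhd T p) = p) \<and>
           (\<forall>F\<in>points T (\<subseteq>) between. nbhd T (k F) = F))) \<and>
   \<comment> \<open>nbhd is natural\<close>
   (\<forall>(P::'a set) T (P'::'b set) T' f. sober P T \<and> sober P' T' \<and> cont P T P' T' f \<longrightarrow>
      (\<forall>p\<in>P. st_map T' (fr_map P f) (nbhd T p) = nbhd T' (f p))) \<and>
   \<comment> \<open>Op is an isomorphism in Spatial\<close>
   (\<forall>(X::'x set) le cm. spatial X le cm \<longrightarrow>
      sf_morphism X le cm (st_opens X le cm) (\<subseteq>) between (opp X le cm) \<and>
      (\<exists>k. sf_morphism (st_opens X le cm) (\<subseteq>) between X le cm k \<and>
           (\<forall>x\<in>X. k (opp X le cm x) = x) \<and>
           (\<forall>U\<in>st_opens X le cm. opp X le cm (k U) = U))) \<and>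
   \<comment> \<open>Op is natural\<close>
   (\<forall>(X'::'y set) le' cm' (X::'x set) le cm g.
      spatial X' le' cm' \<and> spatial X le cm \<and> sf_morphism X' le' cm' X le cm g \<longrightarrow>
      (\<forall>x'\<in>X'. fr_map (points X le cm) (st_map X' g) (opp X' le' cm' x') = opp X le cm (g x')))"
proof (intro conjI)
  show "\<forall>(P::'a set) T. sober P T \<longrightarrow> spatial T (\<subseteq>) between" by (intro allI impI ballI, (elim conjE)?, rule frA; assumption)
  show "\<forall>(P::'a set) T (P'::'b set) T' f. sober P T \<and> sober P' T' \<and> cont P T P' T' f \<longrightarrow>
      sf_morphism T' (\<subseteq>) between T (\<subseteq>) between (fr_map P f)" by (intro allI impI ballI, (elim conjE)?, rule frB; assumption)
  show "\<forall>(P::'a set) T. sober P T \<longrightarrow> (\<forall>U\<in>T. fr_map P id U = U)" by (intro allI impI ballI, (elim conjE)?, rule frC; assumption)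
  show "\<forall>(P1::'a set) T1 (P2::'b set) T2 (P3::'c set) T3 f h.
      sober P1 T1 \<and> sober P2 T2 \<and> sober P3 T3 \<and> cont P1 T1 P2 T2 f \<and> cont P2 T2 P3 T3 h \<longrightarrow>
      (\<forall>U\<in>T3. fr_map P1 (h \<circ> f) U = fr_map P1 f (fr_map P2 h U))" by (intro allI impI ballI, (elim conjE)?, rule frD; assumption)
  show "\<forall>(X::'x set) le cm. spatial X le cm \<longrightarrow> sober (points X le cm) (st_opens X le cm)" by (intro allI impI ballI, (elim conjE)?, rule stE; assumption)
  show "\<forall>(X'::'y set) le' cm' (X::'x set) le cm g.
      spatial X' le' cm' \<and> spatial X le cm \<and> sf_morphism X' le' cm' X le cm g \<longrightarrow>
      cont (points X le cm) (st_opens X le cm) (points X' le' cm') (st_opens X' le' cm') (st_map X' g)"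
    by (intro allI impI ballI, (elim conjE)?, rule stF; assumption)
  show "\<forall>(X::'x set) le cm. spatial X le cm \<longrightarrow> (\<forall>F\<in>points X le cm. st_map X id F = F)" by (intro allI impI ballI, (elim conjE)?, rule stG; assumption)
  show "\<forall>(X1::'x set) le1 cm1 (X2::'y set) le2 cm2 (X3::'z set) le3 cm3 g1 g2.
      spatial X1 le1 cm1 \<and> spatial X2 le2 cm2 \<and> spatial X3 le3 cm3 \<and>
      sf_morphism X1 le1 cm1 X2 le2 cm2 g1 \<and> sf_morphism X2 le2 cm2 X3 le3 cm3 g2 \<longrightarrow>
      (\<forall>F\<in>points X3 le3 cm3. st_map X1 (g2 \<circ> g1) F = st_map X1 g1 (st_map X2 g2 F))" by (intro allI impI ballI, (elim conjE)?, rule stH; assumption)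
  show "\<forall>(P::'a set) T. sober P T \<longrightarrow>
      cont P T (points T (\<subseteq>) between) (st_opens T (\<subseteq>) between) (nbhd T) \<and>
      (\<exists>k. cont (points T (\<subseteq>) between) (st_opens T (\<subseteq>) between) P T k \<and>
           (\<forall>p\<in>P. k (nbhd T p) = p) \<and>
           (\<forall>F\<in>points T (\<subseteq>) between. nbhd T (k F) = F))" by (intro allI impI ballI, (elim conjE)?, rule nbhdI; assumption)
  show "\<forall>(P::'a set) T (P'::'b set) T' f. sober P T \<and> sober P' T' \<and> cont P T P' T' f \<longrightarrow>
      (\<forall>p\<in>P. st_map T' (fr_map P f) (nbhd T p) = nbhd T' (f p))" by (intro allI impI ballI, (elim conjE)?, rule nbhdJ; assumption)
  show "\<forall>(X::'x set) le cm. spatial X le cm \<longrightarrow>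
      sf_morphism X le cm (st_opens X le cm) (\<subseteq>) between (opp X le cm) \<and>
      (\<exists>k. sf_morphism (st_opens X le cm) (\<subseteq>) between X le cm k \<and>
           (\<forall>x\<in>X. k (opp X le cm x) = x) \<and>
           (\<forall>U\<in>st_opens X le cm. opp X le cm (k U) = U))" by (intro allI impI ballI, (elim conjE)?, rule opK; assumption)
  show "\<forall>(X'::'y set) le' cm' (X::'x set) le cm g.
      spatial X' le' cm' \<and> spatial X le cm \<and> sf_morphism X' le' cm' X le cm g \<longrightarrow>
      (\<forall>x'\<in>X'. fr_map (points X le cm) (st_map X' g) (opp X' le' cm' x') = opp X le cm (g x'))"
    by (intro allI impI ballI, (elim conjE)?, rule opL; assumption)
qed

end
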